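(* Let $\mathcal{H}=(Q_0,Q_1,\beta)$ be a directed tensor-labeled hypergraph over $\mathbb{R}$ and $k\ge0$. The operator $L_{\le k}:=(\pi_{\le k}\partial_\beta)^*(\pi_{\le k}\partial_\beta)$ on $\mathbb{R}^{Q_1}$ satisfies: (1) $L_{\le k}$ is symmetric positive semi-definite; (2) $\mathrm{Ker}(L_{\le k})=\mathcal{Z}_{\le k}(\mathcal{H})$; (3) $\mathrm{rank}(L_{\le k})=|V_{\mathrm{macro}}|-c_{\mathrm{macro}}-\delta_{\le k}(\mathcal{H})$; (4) if $k\le\ell$ then $L_{\le k}\preceq L_{\le\ell}$ in the Loewner order, and writing the eigenvalues of $L_{\le k}$ in ascending order $0\le\lambda_1^{(k)}\le\cdots\le\lambda_{|Q_1|}^{(k)}$, one has $\lambda_i^{(k)}\le\lambda_i^{(\ell)}$ for all $i$.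
   Context: $T(\mathbb{R}^{Q_0})=\bigoplus_{k\ge0}T^k$, $T^k=(\mathbb{R}^{Q_0})^{\otimes k}$, with the inner product making the standard tensor basis orthonormal (distinct degrees orthogonal); $\pi_{\le k}$ is the orthogonal projection onto $\bigoplus_{j\le k}T^j$. $\mathbb{R}^{Q_1}$ has the standard inner product. A directed tensor-labeled hypergraph is $\mathcal{H}=(Q_0,Q_1,\beta)$ ($Q_0,Q_1$ finite) with $\beta:\mathbb{R}^{Q_1}\to T\times T$ linear, $\beta(\mathbf{1}_e)=(A_e,B_e)$; $\partial_\beta:\mathbf{1}_e\mapsto B_e-A_e$; $^*$ denotes adjoint. $\mathcal{Z}_{\le k}(\mathcal{H})=\mathrm{Ker}(\pi_{\le k}\circ\partial_\beta)$. $V_{\mathrm{macro}}=\{A_e\}\cup\{B_e\}$; macrograph on $V_{\mathrm{macro}}$ with edges $Q_1$, $e:A_e\to B_e$, $c_{\mathrm{macro}}$ its number of weakly connected components; $B_{\mathrm{macro}}:\mathbf{1}_e\mapsto\mathbf{1}_{B_e}-\mathbf{1}_{A_e}$; $\hat\phi:\mathbb{R}^{V_{\mathrm{macro}}}\to T(\mathbb{R}^{Q_0})$, $\mathbf{1}_w\mapsto w$; $\delta_{\le k}(\mathcal{H})=\dim(\mathrm{Im}B_{\mathrm{macro}}\cap\mathrm{Ker}(\pi_{\le k}\circ\hat\phi))$. *)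

theory Defs
  imports "HOL-Analysis.Analysis" "HOL-Computational_Algebra.Polynomial" "HOL-Library.Function_Algebras"
begin

text \<open>Tensors in T(R^Q0) are finitely supported real functions on words over Q0;
  the word w = [q1,...,qn] stands for the basis tensor e_q1 (x) ... (x) e_qn,
  so the degree of w is its length. Q1 is the finite index type 'e, R^Q1 = real^'e.\<close>

type_synonym 'v tensor = "'v list \<Rightarrow> real"

definition tensor_inner :: "'v tensor \<Rightarrow> 'v tensor \<Rightarrow> real" where
  "tensor_inner s t = infsum (\<lambda>w. s w * t w) UNIV"

definition trunc :: "nat \<Rightarrow> 'v tensor \<Rightarrow> 'v tensor" where
  "trunc k t = (\<lambda>w. if length w \<le> k then t w else 0)"

definition bdry :: "('e::finite \<Rightarrow> 'v tensor) \<Rightarrow> ('e \<Rightarrow> 'v tensor) \<Rightarrow> real^'e \<Rightarrow> 'v tensor" where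
  "bdry A B x = (\<lambda>w. \<Sum>e\<in>UNIV. x $ e * (B e w - A e w))"

text \<open>adjoint of a linear map D : R^Q1 -> T w.r.t. the standard inner products
  (R^Q1 has the orthonormal basis axis e 1)\<close>
definition tensor_adjoint :: "(real^'e::finite \<Rightarrow> 'v tensor) \<Rightarrow> 'v tensor \<Rightarrow> real^'e" where
  "tensor_adjoint D t = (\<chi> e. tensor_inner (D (axis e 1)) t)"

definition Lop :: "('e::finite \<Rightarrow> 'v tensor) \<Rightarrow> ('e \<Rightarrow> 'v tensor) \<Rightarrow> nat \<Rightarrow> real^'e \<Rightarrow> real^'e" where
  "Lop A B k x = tensor_adjoint (\<lambda>y. trunc k (bdry A B y)) (trunc k (bdry A B x))"

definition Lmat :: "('e::finite \<Rightarrow> 'v tensor) \<Rightarrow> ('e \<Rightarrow> 'v tensor) \<Rightarrow> nat \<Rightarrow> real^'e^'e" where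
  "Lmat A B k = matrix (Lop A B k)"

definition Zk :: "('e::finite \<Rightarrow> 'v tensor) \<Rightarrow> ('e \<Rightarrow> 'v tensor) \<Rightarrow> nat \<Rightarrow> (real^'e) set" where
  "Zk A B k = {x. trunc k (bdry A B x) = (\<lambda>_. 0)}"

definition Vmacro :: "('e \<Rightarrow> 'v tensor) \<Rightarrow> ('e \<Rightarrow> 'v tensor) \<Rightarrow> 'v tensor set" where
  "Vmacro A B = range A \<union> range B"

definition macro_edges :: "('e \<Rightarrow> 'v tensor) \<Rightarrow> ('e \<Rightarrow> 'v tensor) \<Rightarrow> ('v tensor \<times> 'v tensor) set" where
  "macro_edges A B = (\<lambda>e. (A e, B e)) ` UNIV"

definition c_macro :: "('e \<Rightarrow> 'v tensor) \<Rightarrow> ('e \<Rightarrow> 'v tensor) \<Rightarrow> nat" where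
  "c_macro A B = card (Vmacro A B // ((macro_edges A B \<union> (macro_edges A B)\<inverse>)\<^sup>*))"

text \<open>R^{V_macro} is represented by real functions on tensors supported in V_macro\<close>
definition Bmacro :: "('e::finite \<Rightarrow> 'v tensor) \<Rightarrow> ('e \<Rightarrow> 'v tensor) \<Rightarrow> real^'e \<Rightarrow> ('v tensor \<Rightarrow> real)" where
  "Bmacro A B x = (\<lambda>v. \<Sum>e\<in>UNIV. x $ e * (indicator {B e} v - indicator {A e} v))"

definition phi_hat :: "('e \<Rightarrow> 'v tensor) \<Rightarrow> ('e \<Rightarrow> 'v tensor) \<Rightarrow> ('v tensor \<Rightarrow> real) \<Rightarrow> 'v tensor" where
  "phi_hat A B f = (\<lambda>w. \<Sum>v\<in>Vmacro A B. f v * v w)"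

definition delta :: "('e::finite \<Rightarrow> 'v tensor) \<Rightarrow> ('e \<Rightarrow> 'v tensor) \<Rightarrow> nat \<Rightarrow> nat" where
  "delta A B k = vector_space.dim (\<lambda>(r::real) (f::'v tensor \<Rightarrow> real). (\<lambda>v. r * f v))
      (range (Bmacro A B) \<inter> {f. trunc k (phi_hat A B f) = (\<lambda>_. 0)})"

definition charpoly :: "real^'n^'n \<Rightarrow> real poly" where
  "charpoly M = det ((\<chi> i j. if i = j then [:0, 1:] else 0) - (\<chi> i j. [: M $ i $ j :]))"

text \<open>eigenvalues with multiplicity, in ascending order (for matrices whose characteristic
  polynomial splits over R, e.g. symmetric ones); index i here is lambda_{i+1} in the paper\<close>
definition eigenvalues_asc :: "real^'n::finite^'n \<Rightarrow> real list" where
  "eigenvalues_asc M = (THE xs. sorted xs \<and> length xs = CARD('n) \<and>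
       charpoly M = (\<Prod>x\<leftarrow>xs. [:-x, 1:]))"

end

theory Submission
  imports Defs
begin

definition Wk :: "nat \<Rightarrow> ('v::finite) list set" where
  "Wk k = {w. length w \<le> k}"

lemma finite_Wk: "finite (Wk k :: ('v::finite) list set)"
proof -
  have "Wk k = {xs::'v list. set xs \<subseteq> UNIV \<and> length xs \<le> k}" by (auto simp: Wk_def)
  then show ?thesis using finite_lists_length_le[of "UNIV::'v set" k] by simp
qed

lemma Wk_mono: "k \<le> l \<Longrightarrow> Wk k \<subseteq> Wk l" by (auto simp: Wk_def)

lemma inner_trunc:
  "tensor_inner (trunc k s) t = (\<Sum>w\<in>Wk k. s w * (t::'v::finite tensor) w)"
proof -
  have "tensor_inner (trunc k s) t = infsum (\<lambda>w. trunc k s w * t w) UNIV"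
    by (simp add: tensor_inner_def)
  also have "\<dots> = infsum (\<lambda>w. s w * t w) (Wk k)"
    by (rule infsum_cong_neutral) (auto simp: trunc_def Wk_def)
  also have "\<dots> = (\<Sum>w\<in>Wk k. s w * t w)" by (rule infsum_finite[OF finite_Wk])
  finally show ?thesis .
qed


definition G :: "('e::finite \<Rightarrow> 'v tensor) \<Rightarrow> ('e \<Rightarrow> 'v tensor) \<Rightarrow> real^'e \<Rightarrow> 'v list \<Rightarrow> real" where
  "G A B x w = (\<Sum>e\<in>UNIV. x $ e * (B e w - A e w))"

context fixes A B :: "'e::finite \<Rightarrow> 'v::finite list \<Rightarrow> real" begin

lemma bdry_G: "bdry A B x = G A B x" by (simp add: bdry_def G_def fun_eq_iff)

lemma bdry_axis: "bdry A B (axis i 1) w = B i w - A i w"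
proof -
  have "bdry A B (axis i 1) w = (\<Sum>e\<in>UNIV. (if e = i then B e w - A e w else 0))"
    unfolding bdry_def by (rule sum.cong) (auto simp: axis_def)
  then show ?thesis by simp
qed

lemma Lmat_entry:
  "Lmat A B k $ i $ j = (\<Sum>w\<in>Wk k. (B i w - A i w) * (B j w - A j w))"
proof -
  have "Lmat A B k $ i $ j = tensor_inner (trunc k (bdry A B (axis i 1))) (trunc k (bdry A B (axis j 1)))"
    by (simp add: Lmat_def matrix_def Lop_def tensor_adjoint_def)
  also have "\<dots> = (\<Sum>w\<in>Wk k. (B i w - A i w) * (B j w - A j w))"
    unfolding inner_trunc by (rule sum.cong) (auto simp: bdry_axis trunc_def Wk_def)
  finally show ?thesis .
qed

lemma Lmat_symm: "transpose (Lmat A B k) = Lmat A B k"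
  unfolding transpose_def vec_eq_iff
  by (auto simp: Lmat_entry intro!: sum.cong)

lemma Lmat_mult:
  "(Lmat A B k *v x) $ i = (\<Sum>w\<in>Wk k. (B i w - A i w) * G A B x w)"
proof -
  have "(Lmat A B k *v x) $ i = (\<Sum>j\<in>UNIV. (\<Sum>w\<in>Wk k. (B i w - A i w) * (B j w - A j w)) * x $ j)"
    by (simp add: matrix_vector_mult_def Lmat_entry)
  also have "\<dots> = (\<Sum>w\<in>Wk k. \<Sum>j\<in>UNIV. (B i w - A i w) * (x $ j * (B j w - A j w)))"
    by (subst sum.swap) (simp add: sum_distrib_right sum_distrib_left mult_ac)
  also have "\<dots> = (\<Sum>w\<in>Wk k. (B i w - A i w) * G A B x w)"
    by (simp add: G_def sum_distrib_left)
  finally show ?thesis .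
qed

lemma Lmat_quad:
  "x \<bullet> (Lmat A B k *v x) = (\<Sum>w\<in>Wk k. (G A B x w)\<^sup>2)"
proof -
  have "x \<bullet> (Lmat A B k *v x) = (\<Sum>i\<in>UNIV. x $ i * (\<Sum>w\<in>Wk k. (B i w - A i w) * G A B x w))"
    by (simp add: inner_vec_def Lmat_mult)
  also have "\<dots> = (\<Sum>w\<in>Wk k. \<Sum>i\<in>UNIV. x $ i * (B i w - A i w) * G A B x w)"
    by (subst sum.swap) (simp add: sum_distrib_left mult_ac)
  also have "\<dots> = (\<Sum>w\<in>Wk k. (G A B x w)\<^sup>2)"
    by (simp add: G_def sum_distrib_right power2_eq_square)
  finally show ?thesis .
qed

lemma Lmat_psd: "0 \<le> x \<bullet> (Lmat A B k *v x)"
  by (simp add: Lmat_quad sum_nonneg)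

lemma Lmat_mono: "k \<le> l \<Longrightarrow> x \<bullet> (Lmat A B k *v x) \<le> x \<bullet> (Lmat A B l *v x)"
  unfolding Lmat_quad by (rule sum_mono2[OF finite_Wk Wk_mono]) auto

lemma Lmat_ker: "{x. Lmat A B k *v x = 0} = Zk A B k"
proof (intro set_eqI iffI)
  fix x assume "x \<in> {x. Lmat A B k *v x = 0}"
  then have "x \<bullet> (Lmat A B k *v x) = 0" by simp
  then have "(\<Sum>w\<in>Wk k. (G A B x w)\<^sup>2) = 0" by (simp only: Lmat_quad)
  then have z: "\<forall>w\<in>Wk k. (G A B x w)\<^sup>2 = 0"
    by (subst (asm) sum_nonneg_eq_0_iff[OF finite_Wk]) auto
  have "trunc k (bdry A B x) = (\<lambda>_. 0)"
  proof
    fix w show "trunc k (bdry A B x) w = 0"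
      using z by (simp add: trunc_def bdry_G Wk_def)
  qed
  then show "x \<in> Zk A B k" by (simp add: Zk_def)
next
  fix x assume "x \<in> Zk A B k"
  then have t: "trunc k (bdry A B x) = (\<lambda>_. 0)" by (simp add: Zk_def)
  have "G A B x w = 0" if "w \<in> Wk k" for w
  proof -
    have "trunc k (bdry A B x) w = 0" using t by simp
    then show ?thesis using that by (simp add: trunc_def bdry_G Wk_def)
  qed
  then have "\<forall>w\<in>Wk k. G A B x w = 0" by blast
  then show "x \<in> {x. Lmat A B k *v x = 0}"
    by (simp add: vec_eq_iff Lmat_mult)
qed

end

lemma symm_dot:
  fixes M :: "real^'n^'n"
  assumes "transpose M = M"
  shows "x \<bullet> (M *v y) = (M *v x) \<bullet> y"
proof -
  have "x \<bullet> (M *v y) = (x v* M) \<bullet> y" by (simp add: dot_lmul_matrix)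
  also have "x v* M = M *v x" by (metis assms vector_transpose_matrix)
  finally show ?thesis .
qed

lemma quad_cont: "continuous_on S (\<lambda>x::real^'n. x \<bullet> (M *v x))"
proof -
  have "continuous_on S ((*v) M)"
    by (rule linear_continuous_on) (rule matrix_vector_mul_bounded_linear)
  then show ?thesis by (intro continuous_on_inner continuous_on_id)
qed

lemma quad_neg_lemma:
  fixes a b :: real
  assumes "\<And>t. 0 \<le> 2 * t * a + t\<^sup>2 * b" "b \<ge> 0" "a \<ge> 0"
  shows "a = 0"
proof (rule ccontr)
  assume "a \<noteq> 0" then have a: "a > 0" using assms by simp
  define t where "t = - a / (b + 1)"
  have b1: "b + 1 > 0" using assms by simp
  have "0 \<le> 2 * t * a + t\<^sup>2 * b" by fact
  then have "0 \<le> (b+1)\<^sup>2 * (2 * t * a + t\<^sup>2 * b)" by simp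
  also have "(b+1)\<^sup>2 * (2 * t * a + t\<^sup>2 * b) = - 2 * a\<^sup>2 * (b+1) + a\<^sup>2 * b"
  proof -
    have tb: "t * (b+1) = -a" using b1 by (simp add: t_def)
    have "(b+1)\<^sup>2 * (2 * t * a + t\<^sup>2 * b) = 2 * a * (b+1) * (t * (b+1)) + (t * (b+1))\<^sup>2 * b"
      by (simp add: power2_eq_square algebra_simps)
    also have "\<dots> = - 2 * a\<^sup>2 * (b+1) + a\<^sup>2 * b" by (simp add: tb power2_eq_square)
    finally show ?thesis .
  qed
  finally have "0 \<le> - 2 * a\<^sup>2 * (b+1) + a\<^sup>2 * b" .
  moreover have "a\<^sup>2 > 0" using a by simp
  moreover have "- 2 * a\<^sup>2 * (b+1) + a\<^sup>2 * b = - (a\<^sup>2 * (b+2))" by (simp add: algebra_simps)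
  moreover have "a\<^sup>2 * (b+2) > 0" using a assms(2) by simp
  ultimately show False by linarith
qed

lemma eig_exists:
  fixes M :: "real^'n^'n"
  assumes sym: "transpose M = M" and S: "subspace S" and nz: "x1 \<in> S" "x1 \<noteq> 0"
    and inv: "\<And>x. x \<in> S \<Longrightarrow> M *v x \<in> S"
  shows "\<exists>x l. x \<in> S \<and> norm x = 1 \<and> M *v x = l *\<^sub>R x"
proof -
  let ?q = "\<lambda>x::real^'n. x \<bullet> (M *v x)"
  let ?T = "sphere 0 1 \<inter> S"
  have cT: "compact ?T" by (intro compact_Int_closed compact_sphere closed_subspace S)
  have "x1 /\<^sub>R norm x1 \<in> ?T" using nz S by (simp add: subspace_scale)
  then have neT: "?T \<noteq> {}" by blast
  obtain x0 where x0: "x0 \<in> ?T" and mx: "\<And>y. y \<in> ?T \<Longrightarrow> ?q y \<le> ?q x0"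
    using continuous_attains_sup[OF cT neT quad_cont] by blast
  define l where "l = ?q x0"
  have x0S: "x0 \<in> S" and nx0: "norm x0 = 1" using x0 by auto
  have x0x0: "x0 \<bullet> x0 = 1" using nx0 by (simp add: norm_eq_1)
  have bound: "?q y \<le> l * (y \<bullet> y)" if "y \<in> S" for y
  proof (cases "y = 0")
    case True then show ?thesis by simp
  next
    case False
    define y' where "y' = y /\<^sub>R norm y"
    have "y' \<in> ?T" using False that S by (simp add: y'_def subspace_scale)
    then have "?q y' \<le> l" using mx l_def by blast
    moreover have "?q y = (norm y)\<^sup>2 * ?q y'"
    proof -
      have "y = norm y *\<^sub>R y'" using False by (simp add: y'_def)
      then have "?q y = ?q (norm y *\<^sub>R y')" by simp
      also have "\<dots> = (norm y)\<^sup>2 * ?q y'" by (simp add: matrix_vector_mult_scaleR power2_eq_square)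
      finally show ?thesis .
    qed
    moreover have "y \<bullet> y = (norm y)\<^sup>2" by (simp add: power2_norm_eq_inner)
    ultimately show ?thesis by (metis mult.commute mult_right_mono zero_le_power2)
  qed
  define v where "v = l *\<^sub>R x0 - M *v x0"
  have vS: "v \<in> S" unfolding v_def using S x0S inv by (simp add: subspace_diff subspace_scale)
  define a where "a = v \<bullet> v"
  define b where "b = l * (v \<bullet> v) - ?q v"
  have b0: "b \<ge> 0" using bound[OF vS] by (simp add: b_def)
  have key: "0 \<le> 2 * t * a + t\<^sup>2 * b" for t
  proof -
    define z where "z = x0 + t *\<^sub>R v"
    have zS: "z \<in> S" using S x0S vS by (simp add: z_def subspace_add subspace_scale)
    have "?q z = ?q x0 + t * (x0 \<bullet> (M *v v)) + t * (v \<bullet> (M *v x0)) + t\<^sup>2 * ?q v"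
      by (simp add: z_def matrix_vector_right_distrib matrix_vector_mult_scaleR inner_add_left
          inner_add_right power2_eq_square algebra_simps)
    also have "x0 \<bullet> (M *v v) = v \<bullet> (M *v x0)"
      using symm_dot[OF sym, of x0 v] by (simp add: inner_commute)
    finally have qz: "?q z = l + 2 * t * (v \<bullet> (M *v x0)) + t\<^sup>2 * ?q v"
      by (simp add: l_def)
    have zz: "z \<bullet> z = 1 + 2 * t * (v \<bullet> x0) + t\<^sup>2 * (v \<bullet> v)"
      by (simp add: z_def inner_add_left inner_add_right x0x0 power2_eq_square inner_commute algebra_simps)
    have aeq: "a = l * (v \<bullet> x0) - v \<bullet> (M *v x0)"
      by (simp add: a_def v_def inner_diff_right algebra_simps)
    have "?q z \<le> l * (z \<bullet> z)" using bound[OF zS] .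
    moreover have "2 * t * a + t\<^sup>2 * b = l * (z \<bullet> z) - ?q z"
      unfolding qz zz b_def aeq by (simp add: algebra_simps)
    ultimately show ?thesis by simp
  qed
  have "a = 0" by (rule quad_neg_lemma[OF key b0]) (simp add: a_def)
  then have "v = 0" by (simp add: a_def)
  then have "M *v x0 = l *\<^sub>R x0" by (simp add: v_def)
  then show ?thesis using x0S nx0 by blast
qed


lemma spectral_sub:
  fixes M :: "real^'n^'n"
  assumes sym: "transpose M = M"
  shows "subspace S \<Longrightarrow> (\<forall>x\<in>S. M *v x \<in> S) \<Longrightarrow>
    \<exists>Bs. Bs \<subseteq> S \<and> (\<forall>x\<in>Bs. norm x = 1 \<and> (\<exists>l. M *v x = l *\<^sub>R x)) \<and> pairwise orthogonal Bs \<and> S \<subseteq> span Bs"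
proof (induction "dim S" arbitrary: S rule: less_induct)
  case less
  show ?case
  proof (cases "S \<subseteq> {0}")
    case True
    then show ?thesis by (intro exI[of _ "{}"]) auto
  next
    case False
    then obtain x1 where x1: "x1 \<in> S" "x1 \<noteq> 0" by blast
    obtain x0 l where x0: "x0 \<in> S" "norm x0 = 1" "M *v x0 = l *\<^sub>R x0"
      using eig_exists[OF sym less.prems(1) x1] less.prems(2) by blast
    have x0x0: "x0 \<bullet> x0 = 1" using x0(2) by (simp add: norm_eq_1)
    define S' where "S' = S \<inter> {y. x0 \<bullet> y = 0}"
    have subS': "subspace S'" unfolding S'_def
      by (intro subspace_inter less.prems(1) subspace_hyperplane)
    have invS': "\<forall>y\<in>S'. M *v y \<in> S'"
    proof
      fix y assume y: "y \<in> S'"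
      have "x0 \<bullet> (M *v y) = (M *v x0) \<bullet> y" by (rule symm_dot[OF sym])
      also have "\<dots> = l * (x0 \<bullet> y)" by (simp add: x0(3))
      also have "\<dots> = 0" using y by (simp add: S'_def)
      finally show "M *v y \<in> S'" using y less.prems(2) by (simp add: S'_def)
    qed
    have "x0 \<notin> S'" using x0x0 by (simp add: S'_def)
    then have "S' \<subset> S" using x0(1) unfolding S'_def by blast
    then have "span S' \<subset> span S"
    proof -
      have e: "span S' = S'" "span S = S" using subS' less.prems(1) by (simp_all add: span_eq_iff)
      show ?thesis using \<open>S' \<subset> S\<close> by (simp only: e)
    qed
    then have "dim S' < dim S" by (rule dim_psubset)
    from less.hyps[OF this subS' invS'] obtain Bs' where
      Bs': "Bs' \<subseteq> S'" "\<forall>x\<in>Bs'. norm x = 1 \<and> (\<exists>l. M *v x = l *\<^sub>R x)"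
           "pairwise orthogonal Bs'" "S' \<subseteq> span Bs'" by blast
    define Bs where "Bs = insert x0 Bs'"
    have "Bs \<subseteq> S" using Bs'(1) x0(1) by (auto simp: Bs_def S'_def)
    moreover have "\<forall>x\<in>Bs. norm x = 1 \<and> (\<exists>l. M *v x = l *\<^sub>R x)"
      using Bs'(2) x0 by (auto simp: Bs_def)
    moreover have "pairwise orthogonal Bs"
    proof -
      have "\<forall>y\<in>Bs'. y \<noteq> x0 \<longrightarrow> orthogonal x0 y \<and> orthogonal y x0"
        using Bs'(1) by (auto simp: S'_def orthogonal_def inner_commute)
      then show ?thesis using Bs'(3) by (simp add: Bs_def pairwise_insert)
    qed
    moreover have "S \<subseteq> span Bs"
    proof
      fix y assume y: "y \<in> S"
      define y' where "y' = y - (x0 \<bullet> y) *\<^sub>R x0"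
      have "y' \<in> S'" using y x0 x0x0 less.prems(1)
        by (simp add: S'_def y'_def subspace_diff subspace_scale inner_diff_right)
      then have "y' \<in> span Bs" using Bs'(4) span_mono[of Bs' Bs] by (auto simp: Bs_def)
      moreover have "x0 \<in> span Bs" by (simp add: Bs_def span_base)
      ultimately have "y' + (x0 \<bullet> y) *\<^sub>R x0 \<in> span Bs"
        by (intro span_add span_scale)
      then show "y \<in> span Bs" by (simp add: y'_def)
    qed
    ultimately show ?thesis by blast
  qed
qed

lemma spectral:
  fixes M :: "real^'n^'n"
  assumes sym: "transpose M = M"
  shows "\<exists>u l. (\<forall>i j. u i \<bullet> u j = (if i = j then 1 else 0)) \<and> (\<forall>i::'n. M *v u i = l i *\<^sub>R u i)"
proof -
  obtain Bs where Bs: "\<forall>x\<in>Bs. norm x = 1 \<and> (\<exists>l. M *v x = l *\<^sub>R x)"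
     "pairwise orthogonal Bs" "(UNIV::(real^'n) set) \<subseteq> span Bs"
    using spectral_sub[OF sym, of UNIV] by auto
  have ind: "independent Bs"
    using Bs(1,2) by (intro pairwise_orthogonal_independent) auto
  have fin: "finite Bs" using ind by (rule independent_imp_finite)
  have "card Bs = dim (UNIV::(real^'n) set)"
    using ind Bs(3) by (intro basis_card_eq_dim) auto
  then have cB: "card Bs = CARD('n)" by (simp add: dim_UNIV)
  obtain h where h: "bij_betw h (UNIV::'n set) Bs"
    using finite_same_card_bij[OF finite fin] cB by auto
  define l where "l i = (SOME c. M *v h i = c *\<^sub>R h i)" for i
  have "M *v h i = l i *\<^sub>R h i" for i
  proof -
    have "h i \<in> Bs" using h by (auto simp: bij_betw_def)
    then have "\<exists>c. M *v h i = c *\<^sub>R h i" using Bs(1) by blast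
    then show ?thesis unfolding l_def by (rule someI_ex)
  qed
  moreover have "h i \<bullet> h j = (if i = j then 1 else 0)" for i j
  proof (cases "i = j")
    case True
    have "h i \<in> Bs" using h by (auto simp: bij_betw_def)
    then show ?thesis using True Bs(1) by (simp add: norm_eq_1)
  next
    case False
    then have "h i \<noteq> h j" using h by (auto simp: bij_betw_def inj_on_def)
    moreover have "h i \<in> Bs" "h j \<in> Bs" using h by (auto simp: bij_betw_def)
    ultimately show ?thesis using False Bs(2) by (auto simp: pairwise_def orthogonal_def)
  qed
  ultimately show ?thesis by blast
qed

lemma sum_const_poly: "(\<Sum>i\<in>S. [:f i::real:]) = [:sum f S:]"
  by (induct S rule: infinite_finite_induct) auto

lemma charpoly_eig:
  fixes M :: "real^'n^'n" and u :: "'n \<Rightarrow> real^'n"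
  assumes on: "\<forall>i j. u i \<bullet> u j = (if i = j then 1 else 0)"
    and eig: "\<forall>i. M *v u i = l i *\<^sub>R u i"
  shows "charpoly M = (\<Prod>i\<in>UNIV. [:- l i, 1:])"
proof -
  define Qp :: "real poly^'n^'n" where "Qp = (\<chi> i j. [: u j $ i :])"
  define XI :: "real poly^'n^'n" where "XI = (\<chi> i j. if i = j then [:0, 1:] else 0)"
  define Mp :: "real poly^'n^'n" where "Mp = (\<chi> i j. [: M $ i $ j :])"
  define Dp :: "real poly^'n^'n" where "Dp = (\<chi> i j. if i = j then [:- l i, 1:] else 0)"
  have QQ: "transpose Qp ** Qp = mat 1"
  proof -
    have "(transpose Qp ** Qp) $ i $ j = mat 1 $ i $ j" for i j
    proof -
      have "(transpose Qp ** Qp) $ i $ j = (\<Sum>k\<in>UNIV. [: u j $ k * u i $ k :])"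
        by (simp add: matrix_matrix_mult_def transpose_def Qp_def)
      also have "\<dots> = [: u j \<bullet> u i :]" by (simp add: sum_const_poly inner_vec_def)
      also have "\<dots> = mat 1 $ i $ j" using on by (auto simp: mat_def)
      finally show ?thesis .
    qed
    then show ?thesis by (simp add: vec_eq_iff)
  qed
  have "det (transpose Qp ** Qp) = 1" by (simp add: QQ det_I)
  then have "det Qp * det Qp = 1" by (simp add: det_mul det_transpose)
  then have dQ: "det Qp \<noteq> 0" by auto
  have comm: "(XI - Mp) ** Qp = Qp ** Dp"
  proof -
    have "((XI - Mp) ** Qp) $ i $ j = (Qp ** Dp) $ i $ j" for i j
    proof -
      have e1: "((XI - Mp) ** Qp) $ i $ j = (\<Sum>k\<in>UNIV. (XI - Mp) $ i $ k * Qp $ k $ j)"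
        by (simp add: matrix_matrix_mult_def)
      have e2: "(XI - Mp) $ i $ k * Qp $ k $ j = (if i = k then [:0, 1:] * [: u j $ i :] else 0) - [: M $ i $ k * u j $ k :]" for k
        by (cases "i = k") (simp_all add: XI_def Mp_def Qp_def left_diff_distrib)
      have d1: "(\<Sum>k\<in>UNIV. (if i = k then [:0, 1:] * [: u j $ i :] else 0)) = [:0, 1:] * [: u j $ i :]"
        by (simp only: sum.delta' finite_class.finite_UNIV UNIV_I if_True)
      have d2: "(\<Sum>k\<in>UNIV. [: M $ i $ k * u j $ k :]) = [: l j * u j $ i :]"
      proof -
        have "(\<Sum>k\<in>UNIV. [: M $ i $ k * u j $ k :]) = [: (M *v u j) $ i :]"
          by (simp only: sum_const_poly matrix_vector_mult_def vec_lambda_beta)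
        also have "\<dots> = [: l j * u j $ i :]" using eig by simp
        finally show ?thesis .
      qed
      have "((XI - Mp) ** Qp) $ i $ j
          = (\<Sum>k\<in>UNIV. (if i = k then [:0, 1:] * [: u j $ i :] else 0)) - (\<Sum>k\<in>UNIV. [: M $ i $ k * u j $ k :])"
        unfolding e1 e2 by (simp only: sum_subtractf)
      also have "\<dots> = [:0, 1:] * [: u j $ i :] - [: l j * u j $ i :]"
        by (simp only: d1 d2)
      also have "\<dots> = [: u j $ i :] * [:- l j, 1:]"
        by (simp add: algebra_simps)
      also have "\<dots> = (Qp ** Dp) $ i $ j"
      proof -
        have e3: "Qp $ i $ k * Dp $ k $ j = (if k = j then [: u j $ i :] * [:- l j, 1:] else 0)" for k
          by (cases "k = j") (simp_all add: Qp_def Dp_def)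
        have "(Qp ** Dp) $ i $ j = (\<Sum>k\<in>UNIV. (if k = j then [: u j $ i :] * [:- l j, 1:] else 0))"
          by (simp only: matrix_matrix_mult_def vec_lambda_beta e3)
        then show ?thesis by (simp only: sum.delta finite_class.finite_UNIV UNIV_I if_True)
      qed
      finally show ?thesis .
    qed
    then show ?thesis unfolding vec_eq_iff by blast
  qed
  have "det (XI - Mp) * det Qp = det Qp * det Dp"
    by (metis comm det_mul)
  then have "det (XI - Mp) * det Qp = det Dp * det Qp" by (simp only: mult.commute)
  then have e: "det (XI - Mp) = det Dp" using dQ by (metis mult_right_cancel)
  have cp: "charpoly M = det (XI - Mp)" by (simp only: charpoly_def XI_def Mp_def)
  have dd: "det Dp = (\<Prod>i\<in>UNIV. Dp $ i $ i)"
    by (rule det_diagonal) (simp add: Dp_def)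
  have "(\<Prod>i\<in>UNIV. Dp $ i $ i) = (\<Prod>i\<in>UNIV. [:- l i, 1:])"
    by (simp add: Dp_def)
  then show ?thesis using cp e dd by simp
qed

lemma prod_list_remove1:
  "x \<in> set ys \<Longrightarrow> prod_list (map f ys) = f x * prod_list (map f (remove1 x ys))"
  for f :: "'a \<Rightarrow> 'b::comm_monoid_mult"
  by (induct ys) (auto simp: mult_ac)

lemma poly_prod_lin_zero: "poly (\<Prod>x\<leftarrow>ys. [:- x, 1::real:]) a = 0 \<Longrightarrow> a \<in> set ys"
  by (induct ys) auto

lemma prod_lin_mset:
  "(\<Prod>x\<leftarrow>xs. [:- x, 1::real:]) = (\<Prod>x\<leftarrow>ys. [:- x, 1:]) \<Longrightarrow> mset xs = mset ys"
proof (induction xs arbitrary: ys)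
  case Nil
  show ?case
  proof (cases ys)
    case (Cons y ys')
    have "poly (\<Prod>x\<leftarrow>ys. [:- x, 1::real:]) y = 0"
      by (simp add: Cons)
    moreover have "(\<Prod>x\<leftarrow>ys. [:- x, 1::real:]) = 1"
      using Nil.prems by (simp only: list.map prod_list.Nil)
    ultimately show ?thesis by simp
  qed simp
next
  case (Cons x xs)
  let ?f = "\<lambda>x. [:- x, 1::real:]"
  have "poly (\<Prod>x\<leftarrow>ys. [:- x, 1::real:]) x = poly (\<Prod>x\<leftarrow>x # xs. [:- x, 1::real:]) x"
    using Cons.prems by (simp only:)
  also have "\<dots> = 0" by simp
  finally have "poly (\<Prod>x\<leftarrow>ys. [:- x, 1::real:]) x = 0" .
  then have xy: "x \<in> set ys" by (rule poly_prod_lin_zero)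
  have "?f x * (\<Prod>x\<leftarrow>xs. ?f x) = (\<Prod>x\<leftarrow>x # xs. ?f x)"
    by (simp only: list.map prod_list.Cons)
  also have "\<dots> = (\<Prod>x\<leftarrow>ys. ?f x)" by (rule Cons.prems)
  also have "\<dots> = ?f x * (\<Prod>x\<leftarrow>remove1 x ys. ?f x)" by (rule prod_list_remove1[OF xy])
  finally have eq: "?f x * (\<Prod>x\<leftarrow>xs. ?f x) = ?f x * (\<Prod>x\<leftarrow>remove1 x ys. ?f x)" .
  have nz: "?f x \<noteq> 0" by simp
  have "(\<Prod>x\<leftarrow>xs. ?f x) = (\<Prod>x\<leftarrow>remove1 x ys. ?f x)"
    using eq by (rule mult_left_cancel[OF nz, THEN iffD1])
  then have "mset xs = mset (remove1 x ys)" by (rule Cons.IH)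
  then show ?case using xy by (simp add: insert_DiffM)
qed

lemma sorted_mset_unique: "sorted xs \<Longrightarrow> sorted ys \<Longrightarrow> mset xs = mset ys \<Longrightarrow> xs = (ys::real list)"
  by (metis properties_for_sort sorted_sort_id)

lemma eig_asc:
  fixes M :: "real^'n^'n" and u :: "'n \<Rightarrow> real^'n"
  assumes on: "\<forall>i j. u i \<bullet> u j = (if i = j then 1 else 0)"
    and eig: "\<forall>i. M *v u i = l i *\<^sub>R u i"
  shows "\<exists>es. distinct es \<and> set es = UNIV \<and> sorted (map l es) \<and> eigenvalues_asc M = map l es"
proof -
  obtain xs where xs: "set xs = (UNIV::'n set)" "distinct xs"
    by (metis finite_class.finite_UNIV finite_distinct_list)
  define es where "es = sort_key l xs"
  have es: "distinct es" "set es = UNIV" "sorted (map l es)"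
    using xs by (simp_all add: es_def)
  have len: "length (map l es) = CARD('n)"
    using es distinct_card[of es] by simp
  have cp: "charpoly M = (\<Prod>x\<leftarrow>map l es. [:- x, 1:])"
  proof -
    have "charpoly M = (\<Prod>i\<in>set es. [:- l i, 1:])" using charpoly_eig[OF on eig] es(2) by (simp only:)
    also have "\<dots> = (\<Prod>i\<leftarrow>es. [:- l i, 1:])" by (rule prod.distinct_set_conv_list[OF es(1)])
    also have "\<dots> = (\<Prod>x\<leftarrow>map l es. [:- x, 1:])" by (simp only: map_map o_def)
    finally show ?thesis .
  qed
  have "eigenvalues_asc M = map l es"
    unfolding eigenvalues_asc_def
  proof (rule the_equality)
    show "sorted (map l es) \<and> length (map l es) = CARD('n) \<and> charpoly M = (\<Prod>x\<leftarrow>map l es. [:- x, 1:])"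
      using es len cp by simp
  next
    fix ys assume "sorted ys \<and> length ys = CARD('n) \<and> charpoly M = (\<Prod>x\<leftarrow>ys. [:- x, 1:])"
    then have "sorted ys" "(\<Prod>x\<leftarrow>ys. [:- x, 1:]) = (\<Prod>x\<leftarrow>map l es. [:- x, 1:])"
      using cp by auto
    then have "sorted ys" "mset ys = mset (map l es)" using prod_lin_mset by blast+
    then show "ys = map l es" using es(3) sorted_mset_unique by blast
  qed
  then show ?thesis using es by blast
qed

lemma orth_inj:
  assumes on: "\<forall>i j. u i \<bullet> u j = (if i = j then 1 else (0::real))"
  shows "inj u"
proof (rule injI)
  fix i j assume "u i = u j"
  then have "u i \<bullet> u j = 1" using on by (metis)
  then show "i = j" using on by (metis zero_neq_one)
qed

lemma orth_indep:
  fixes u :: "'n \<Rightarrow> real^'m"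
  assumes on: "\<forall>i j. u i \<bullet> u j = (if i = j then 1 else 0)"
  shows "independent (u ` J)"
proof (rule pairwise_orthogonal_independent)
  show "pairwise orthogonal (u ` J)"
    using on by (auto simp: pairwise_def orthogonal_def)
  show "0 \<notin> u ` J"
  proof
    assume "0 \<in> u ` J"
    then obtain j where "u j = 0" by auto
    then have "u j \<bullet> u j = 0" by simp
    then show False using on by simp
  qed
qed

lemma expand_span:
  fixes u :: "'n::finite \<Rightarrow> real^'m"
  assumes on: "\<forall>i j. u i \<bullet> u j = (if i = j then 1 else 0)"
    and x: "x \<in> span (u ` J)"
  shows "x = (\<Sum>j\<in>J. (x \<bullet> u j) *\<^sub>R u j)"
proof -
  have inj: "inj_on u J" using orth_inj[OF on] by (simp add: inj_on_def inj_def)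
  have "finite (u ` J)" by simp
  then obtain c where "x = (\<Sum>v\<in>u ` J. c v *\<^sub>R v)"
    using x span_finite[of "u ` J"] by auto
  also have "\<dots> = (\<Sum>j\<in>J. c (u j) *\<^sub>R u j)" by (simp add: sum.reindex[OF inj])
  finally have xe: "x = (\<Sum>j\<in>J. c (u j) *\<^sub>R u j)" .
  have "x \<bullet> u k = c (u k)" if "k \<in> J" for k
  proof -
    have "x \<bullet> u k = (\<Sum>j\<in>J. c (u j) * (u j \<bullet> u k))" by (simp add: xe inner_sum_left)
    also have "\<dots> = (\<Sum>j\<in>J. if j = k then c (u j) else 0)"
      using on by (intro sum.cong) auto
    also have "\<dots> = c (u k)" using that by simp
    finally show ?thesis .
  qed
  then show ?thesis using xe by (metis (no_types, lifting) sum.cong)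
qed

lemma quad_span:
  fixes M :: "real^'n^'n" and u :: "'n \<Rightarrow> real^'n"
  assumes on: "\<forall>i j. u i \<bullet> u j = (if i = j then 1 else 0)"
    and eig: "\<forall>i. M *v u i = l i *\<^sub>R u i"
    and x: "x \<in> span (u ` J)"
  shows "x \<bullet> (M *v x) = (\<Sum>j\<in>J. l j * (x \<bullet> u j)\<^sup>2)" "x \<bullet> x = (\<Sum>j\<in>J. (x \<bullet> u j)\<^sup>2)"
proof -
  have xe: "x = (\<Sum>j\<in>J. (x \<bullet> u j) *\<^sub>R u j)" by (rule expand_span[OF on x])
  have "M *v x = (\<Sum>j\<in>J. (x \<bullet> u j) *\<^sub>R (M *v u j))"
    by (subst xe) (simp add: vec.sum matrix_vector_mult_scaleR)
  also have "\<dots> = (\<Sum>j\<in>J. (x \<bullet> u j * l j) *\<^sub>R u j)" using eig by simp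
  finally have "x \<bullet> (M *v x) = (\<Sum>j\<in>J. x \<bullet> u j * l j * (x \<bullet> u j))"
    by (simp add: inner_sum_right)
  then show "x \<bullet> (M *v x) = (\<Sum>j\<in>J. l j * (x \<bullet> u j)\<^sup>2)"
    by (simp add: power2_eq_square mult_ac)
  have "x \<bullet> x = x \<bullet> (\<Sum>j\<in>J. (x \<bullet> u j) *\<^sub>R u j)" by (subst (2) xe) simp
  then show "x \<bullet> x = (\<Sum>j\<in>J. (x \<bullet> u j)\<^sup>2)"
    by (simp add: inner_sum_right power2_eq_square)
qed

lemma weyl:
  fixes M N :: "real^'n^'n"
  assumes symM: "transpose M = M" and symN: "transpose N = N"
    and le: "\<forall>x. x \<bullet> (M *v x) \<le> x \<bullet> (N *v x)"
    and i: "i < CARD('n)"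
  shows "eigenvalues_asc M ! i \<le> eigenvalues_asc N ! i"
proof -
  obtain uM :: "'n \<Rightarrow> real^'n" and lM where onM: "\<forall>i j. uM i \<bullet> uM j = (if i = j then 1 else 0)"
      and eigM: "\<forall>i. M *v uM i = lM i *\<^sub>R uM i"
    using spectral[OF symM] by blast
  obtain uN :: "'n \<Rightarrow> real^'n" and lN where onN: "\<forall>i j. uN i \<bullet> uN j = (if i = j then 1 else 0)"
      and eigN: "\<forall>i. N *v uN i = lN i *\<^sub>R uN i"
    using spectral[OF symN] by blast
  obtain esM where esM: "distinct esM" "set esM = UNIV" "sorted (map lM esM)" "eigenvalues_asc M = map lM esM"
    using eig_asc[OF onM eigM] by blast
  obtain esN where esN: "distinct esN" "set esN = UNIV" "sorted (map lN esN)" "eigenvalues_asc N = map lN esN"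
    using eig_asc[OF onN eigN] by blast
  let ?n = "CARD('n)"
  have lenM: "length esM = ?n" using esM(1,2) distinct_card[of esM] by simp
  have lenN: "length esN = ?n" using esN(1,2) distinct_card[of esN] by simp
  define mu where "mu = lM (esM ! i)"
  define nu where "nu = lN (esN ! i)"
  have e1: "eigenvalues_asc M ! i = mu" using esM(4) i lenM by (simp add: mu_def)
  have e2: "eigenvalues_asc N ! i = nu" using esN(4) i lenN by (simp add: nu_def)
  show ?thesis
  proof (rule ccontr)
    assume "\<not> ?thesis"
    then have lt: "nu < mu" using e1 e2 by simp
    define JU where "JU = (!) esM ` {i..<?n}"
    define JV where "JV = (!) esN ` {..i}"
    have cU: "card JU = ?n - i" unfolding JU_def
      by (subst card_image) (auto intro!: inj_on_nth esM(1) simp: lenM)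
    have cV: "card JV = Suc i" unfolding JV_def using i
      by (subst card_image) (auto intro!: inj_on_nth esN(1) simp: lenN)
    have bU: "mu \<le> lM j" if jU: "j \<in> JU" for j
    proof -
      obtain p where p: "i \<le> p" "p < ?n" "j = esM ! p" using jU by (auto simp: JU_def)
      have "map lM esM ! i \<le> map lM esM ! p"
        using sorted_nth_mono[OF esM(3)] p lenM by simp
      then show ?thesis using p i lenM by (simp add: mu_def)
    qed
    have bV: "lN j \<le> nu" if jV: "j \<in> JV" for j
    proof -
      obtain p where p: "p \<le> i" "j = esN ! p" using jV by (auto simp: JV_def)
      have "map lN esN ! p \<le> map lN esN ! i"
        using sorted_nth_mono[OF esN(3)] p i lenN by simp
      then show ?thesis using p i lenN by (simp add: nu_def)
    qed
    define U where "U = span (uM ` JU)"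
    define V where "V = span (uN ` JV)"
    have dU: "dim U = ?n - i"
    proof -
      have "dim U = card (uM ` JU)" unfolding U_def
        by (rule dim_span_eq_card_independent[OF orth_indep[OF onM]])
      also have "\<dots> = card JU"
        using orth_inj[OF onM] by (simp add: card_image inj_on_def inj_def)
      finally show ?thesis using cU by simp
    qed
    have dV: "dim V = Suc i"
    proof -
      have "dim V = card (uN ` JV)" unfolding V_def
        by (rule dim_span_eq_card_independent[OF orth_indep[OF onN]])
      also have "\<dots> = card JV"
        using orth_inj[OF onN] by (simp add: card_image inj_on_def inj_def)
      finally show ?thesis using cV by simp
    qed
    have "dim {x + y |x y. x \<in> U \<and> y \<in> V} + dim (U \<inter> V) = dim U + dim V"
      by (rule dim_sums_Int) (simp_all add: U_def V_def subspace_span)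
    moreover have "dim {x + y |x y. x \<in> U \<and> y \<in> V} \<le> ?n" by (rule dim_subset_UNIV_cart)
    ultimately have "dim (U \<inter> V) \<noteq> 0" using dU dV i by linarith
    then obtain x where x: "x \<in> U" "x \<in> V" "x \<noteq> 0"
      by (metis dim_eq_0 subsetI Int_iff singletonI insertI1 subset_singletonD)
    have xx: "x \<bullet> x > 0" using x(3) by simp
    have "mu * (x \<bullet> x) \<le> x \<bullet> (M *v x)"
    proof -
      have "mu * (x \<bullet> x) = (\<Sum>j\<in>JU. mu * (x \<bullet> uM j)\<^sup>2)"
        using quad_span(2)[OF onM eigM x(1)[unfolded U_def]] by (simp add: sum_distrib_left)
      also have "\<dots> \<le> (\<Sum>j\<in>JU. lM j * (x \<bullet> uM j)\<^sup>2)"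
        by (intro sum_mono mult_right_mono bU) auto
      also have "\<dots> = x \<bullet> (M *v x)"
        using quad_span(1)[OF onM eigM x(1)[unfolded U_def]] by simp
      finally show ?thesis .
    qed
    moreover have "x \<bullet> (N *v x) \<le> nu * (x \<bullet> x)"
    proof -
      have "x \<bullet> (N *v x) = (\<Sum>j\<in>JV. lN j * (x \<bullet> uN j)\<^sup>2)"
        using quad_span(1)[OF onN eigN x(2)[unfolded V_def]] by simp
      also have "\<dots> \<le> (\<Sum>j\<in>JV. nu * (x \<bullet> uN j)\<^sup>2)"
        by (intro sum_mono mult_right_mono bV) auto
      also have "\<dots> = nu * (x \<bullet> x)"
        using quad_span(2)[OF onN eigN x(2)[unfolded V_def]] by (simp add: sum_distrib_left)
      finally show ?thesis .
    qed
    ultimately have "mu * (x \<bullet> x) \<le> nu * (x \<bullet> x)" using le by (meson order_trans)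
    then have "mu \<le> nu" using xx by simp
    then show False using lt by simp
  qed
qed

lemma (in vector_space) span_disjoint:
  assumes ind: "independent B" and sub: "B0 \<subseteq> B" and fin: "finite B"
    and x0: "x \<in> span B0" and x1: "x \<in> span (B - B0)"
  shows "x = 0"
proof -
  have f0: "finite B0" using fin sub finite_subset by blast
  have f1: "finite (B - B0)" using fin by simp
  obtain a where a: "x = (\<Sum>b\<in>B0. scale (a b) b)" using x0 span_finite[OF f0] by auto
  obtain c where c: "x = (\<Sum>b\<in>B - B0. scale (c b) b)" using x1 span_finite[OF f1] by auto
  define w where "w b = (if b \<in> B0 then a b else - c b)" for b
  have "(\<Sum>b\<in>B. scale (w b) b) = (\<Sum>b\<in>B0. scale (w b) b) + (\<Sum>b\<in>B - B0. scale (w b) b)"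
    using sum.subset_diff[OF sub fin] by (simp add: add.commute)
  also have "(\<Sum>b\<in>B0. scale (w b) b) = x" using a by (simp add: w_def)
  also have "(\<Sum>b\<in>B - B0. scale (w b) b) = - x"
    using c by (simp add: w_def sum_negf)
  finally have "(\<Sum>b\<in>B. scale (w b) b) = 0" by simp
  then have w0: "\<forall>b\<in>B. w b = 0"
    using ind unfolding independent_explicit_finite_subsets using fin by blast
  have "x = (\<Sum>b\<in>B0. scale (w b) b)" using a by (simp add: w_def)
  also have "\<dots> = 0" using w0 sub by (intro sum.neutral) auto
  finally show ?thesis .
qed

lemma (in vector_space_pair) rank_nullity_sub:
  assumes lin: "Vector_Spaces.linear s1 s2 f" and S: "vs1.subspace S" and fin: "finite C" "S \<subseteq> vs1.span C"
  shows "vs2.dim (f ` S) + vs1.dim (S \<inter> {x. f x = 0}) = vs1.dim S"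
proof -
  define K where "K = S \<inter> {x. f x = 0}"
  have subK: "vs1.subspace K" unfolding K_def
    by (intro vs1.subspace_inter S linear_subspace_kernel[OF lin])
  obtain B0 where B0: "B0 \<subseteq> K" "vs1.independent B0" "K \<subseteq> vs1.span B0" "card B0 = vs1.dim K"
    using vs1.basis_exists by blast
  have "B0 \<subseteq> S" using B0(1) by (auto simp: K_def)
  then obtain B where B: "B0 \<subseteq> B" "B \<subseteq> S" "vs1.independent B" "S \<subseteq> vs1.span B"
    using vs1.maximal_independent_subset_extend[OF _ B0(2)] by blast
  have finB: "finite B"
    using vs1.independent_span_bound[OF fin(1) B(3)] B(2) fin(2) by blast
  have cB: "card B = vs1.dim S" by (rule vs1.basis_card_eq_dim[OF B(2,4,3)])
  define B1 where "B1 = B - B0"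
  have cB1: "card B = card B0 + card B1"
    unfolding B1_def using finB B(1) by (metis card_Diff_subset card_mono finite_subset le_add_diff_inverse)
  have B1S: "B1 \<subseteq> S" using B(2) by (auto simp: B1_def)
  have spB1S: "vs1.span B1 \<subseteq> S" by (rule vs1.span_minimal[OF B1S S])
  have inj: "inj_on f (vs1.span B1)"
  proof (subst linear_inj_on_iff_eq_0[OF lin vs1.subspace_span], intro ballI impI)
    fix x assume x: "x \<in> vs1.span B1" "f x = 0"
    then have "x \<in> K" using spB1S by (auto simp: K_def)
    then have "x \<in> vs1.span B0" using B0(3) by blast
    then show "x = 0" using vs1.span_disjoint[OF B(3) B(1) finB] x(1) by (simp add: B1_def)
  qed
  have indB1: "vs1.independent B1" using B(3) by (rule vs1.independent_mono) (auto simp: B1_def)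
  have ind2: "vs2.independent (f ` B1)"
    by (rule linear_independent_injective_image[OF lin indB1 inj])
  have cf: "card (f ` B1) = card B1"
    using inj vs1.span_superset by (intro card_image) (blast intro: inj_on_subset)
  have sp: "f ` S \<subseteq> vs2.span (f ` B1)"
  proof
    fix y assume "y \<in> f ` S"
    then obtain x where x: "x \<in> S" "y = f x" by auto
    then have "y \<in> f ` vs1.span B" using B(4) by auto
    also have "\<dots> = vs2.span (f ` B)" by (rule linear_span_image[OF lin, symmetric])
    also have "\<dots> \<subseteq> vs2.span (f ` B1)"
    proof (rule vs2.span_minimal[OF _ vs2.subspace_span])
      show "f ` B \<subseteq> vs2.span (f ` B1)"
      proof
        fix z assume "z \<in> f ` B"
        then obtain b where b: "b \<in> B" "z = f b" by auto
        show "z \<in> vs2.span (f ` B1)"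
        proof (cases "b \<in> B0")
          case True
          then have "f b = 0" using B0(1) by (auto simp: K_def)
          then show ?thesis using b vs2.span_zero by simp
        next
          case False
          then show ?thesis using b by (auto simp: B1_def intro: vs2.span_base)
        qed
      qed
    qed
    finally show "y \<in> vs2.span (f ` B1)" .
  qed
  have "card (f ` B1) = vs2.dim (f ` S)"
    by (rule vs2.basis_card_eq_dim[OF _ sp ind2]) (use B1S in auto)
  then show ?thesis using cB cB1 cf B0(4) by (simp add: K_def)
qed

interpretation FV: vector_space "\<lambda>(r::real) (f::'a \<Rightarrow> real) v. r * f v"
  by unfold_locales (auto simp: fun_eq_iff algebra_simps)

lemma fsum_apply: "(\<Sum>t\<in>T. g t) v = (\<Sum>t\<in>T. g t v)" for g :: "'a \<Rightarrow> 'b \<Rightarrow> real"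
  by (induct T rule: infinite_finite_induct) auto

definition ind :: "'a \<Rightarrow> 'a \<Rightarrow> real" where "ind a = (\<lambda>v. if v = a then 1 else 0)"

definition Rm :: "('e \<Rightarrow> 'v tensor) \<Rightarrow> ('e \<Rightarrow> 'v tensor) \<Rightarrow> ('v tensor \<times> 'v tensor) set" where
  "Rm A B = (macro_edges A B \<union> (macro_edges A B)\<inverse>)\<^sup>*"

context fixes A B :: "'e::finite \<Rightarrow> 'v tensor"
begin

lemma finV: "finite (Vmacro A B)" by (simp add: Vmacro_def)

lemma Bm_apply: "Bmacro A B x v = (\<Sum>e\<in>UNIV. x $ e * (ind (B e) v - ind (A e) v))"
  by (simp add: Bmacro_def ind_def indicator_def of_bool_def)

lemma Bm_axis: "Bmacro A B (axis e 1) = ind (B e) - ind (A e)"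
proof
  fix v
  have "Bmacro A B (axis e 1) v = (\<Sum>f\<in>UNIV. (if f = e then ind (B f) v - ind (A f) v else 0))"
    unfolding Bm_apply by (rule sum.cong) (auto simp: axis_def)
  then show "Bmacro A B (axis e 1) v = (ind (B e) - ind (A e)) v" by simp
qed

lemma Bm_add: "Bmacro A B (x + y) = Bmacro A B x + Bmacro A B y"
  by (simp add: fun_eq_iff Bm_apply distrib_right sum.distrib)

lemma Bm_scale: "Bmacro A B (c *\<^sub>R x) = (\<lambda>v. c * Bmacro A B x v)"
  by (simp add: fun_eq_iff Bm_apply sum_distrib_left algebra_simps)

lemma Bm_neg: "Bmacro A B (- x) = - Bmacro A B x"
  using Bm_scale[of "-1" x] by (simp add: fun_eq_iff)

lemma Bm_zero: "Bmacro A B 0 = 0"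
  by (simp add: fun_eq_iff Bm_apply)

lemma Bm_lin: "Vector_Spaces.linear (scaleR :: real \<Rightarrow> real^'e \<Rightarrow> _) (\<lambda>(r::real) (f::'v tensor \<Rightarrow> real) v. r * f v) (Bmacro A B)"
  unfolding Vector_Spaces.linear_iff
  using FV.vector_space_axioms real_vector.vector_space_axioms Bm_add Bm_scale by blast

lemma edge_R: "(A e, B e) \<in> Rm A B"
  by (auto simp: Rm_def macro_edges_def)

lemma equiv_R: "equiv UNIV (Rm A B)"
  unfolding equiv_def Rm_def
  by (auto simp: refl_rtrancl sym_rtrancl sym_Un_converse trans_rtrancl)

lemma path_range: "(a, b) \<in> Rm A B \<Longrightarrow> ind b - ind a \<in> range (Bmacro A B)"
  unfolding Rm_def
proof (induction rule: rtrancl_induct)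
  case base
  show ?case using Bm_zero by (metis diff_self rangeI)
next
  case (step y z)
  have "ind z - ind y \<in> range (Bmacro A B)"
    using step(2)
  proof
    assume "(y, z) \<in> macro_edges A B"
    then obtain e where "y = A e" "z = B e" by (auto simp: macro_edges_def)
    then show ?thesis using Bm_axis by (metis rangeI)
  next
    assume "(y, z) \<in> (macro_edges A B)\<inverse>"
    then obtain e where "z = A e" "y = B e" by (auto simp: macro_edges_def)
    then have "ind z - ind y = Bmacro A B (- axis e 1)" using Bm_axis Bm_neg by simp
    then show ?thesis by simp
  qed
  then obtain x2 where x2: "ind z - ind y = Bmacro A B x2" by auto
  obtain x1 where x1: "ind y - ind a = Bmacro A B x1" using step(3) by (metis rangeE)
  have "ind z - ind a = Bmacro A B (x1 + x2)" using x1 x2 Bm_add by (simp add: algebra_simps)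
  then show ?case by simp
qed

lemma R_closed: "(a, b) \<in> Rm A B \<Longrightarrow> a \<in> Vmacro A B \<Longrightarrow> b \<in> Vmacro A B"
  unfolding Rm_def
  by (induction rule: rtrancl_induct) (auto simp: macro_edges_def Vmacro_def)

lemma class_sub: "C \<in> Vmacro A B // Rm A B \<Longrightarrow> C \<subseteq> Vmacro A B"
  using R_closed by (auto simp: quotient_def)

lemma class_fin: "C \<in> Vmacro A B // Rm A B \<Longrightarrow> finite C"
  using class_sub finV finite_subset by blast

lemma phi_Bm: "phi_hat A B (Bmacro A B x) = bdry A B x"
proof
  fix w
  have "phi_hat A B (Bmacro A B x) w = (\<Sum>v\<in>Vmacro A B. \<Sum>e\<in>UNIV. x $ e * (ind (B e) v - ind (A e) v) * v w)"
    by (simp add: phi_hat_def Bm_apply sum_distrib_right)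
  also have "\<dots> = (\<Sum>e\<in>UNIV. x $ e * ((\<Sum>v\<in>Vmacro A B. ind (B e) v * v w) - (\<Sum>v\<in>Vmacro A B. ind (A e) v * v w)))"
    by (subst sum.swap) (simp add: sum_distrib_left sum_subtractf algebra_simps)
  also have "\<dots> = (\<Sum>e\<in>UNIV. x $ e * (B e w - A e w))"
  proof -
    have "(\<Sum>v\<in>Vmacro A B. ind a v * v w) = a w" if "a \<in> Vmacro A B" for a
    proof -
      have eq: "(\<lambda>v. ind a v * v w) = (\<lambda>v. if v = a then a w else 0)" by (auto simp: ind_def fun_eq_iff)
      show ?thesis by (subst eq) (simp add: that finV)
    qed
    moreover have "A e \<in> Vmacro A B" "B e \<in> Vmacro A B" for e by (auto simp: Vmacro_def)
    ultimately show ?thesis by simp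
  qed
  finally show "phi_hat A B (Bmacro A B x) w = bdry A B x w" by (simp add: bdry_def)
qed

lemma Bm_supp: "v \<notin> Vmacro A B \<Longrightarrow> Bmacro A B x v = 0"
proof -
  assume v: "v \<notin> Vmacro A B"
  have "A e \<in> Vmacro A B" "B e \<in> Vmacro A B" for e by (auto simp: Vmacro_def)
  then have "ind (B e) v = 0" "ind (A e) v = 0" for e using v by (auto simp: ind_def)
  then show ?thesis by (simp add: Bm_apply)
qed

lemma sum_ind: "finite C \<Longrightarrow> (\<Sum>v\<in>C. ind a v) = (if a \<in> C then 1 else 0)"
  by (simp add: ind_def)

lemma sigma_Bm:
  assumes C: "C \<in> Vmacro A B // Rm A B"
  shows "(\<Sum>v\<in>C. Bmacro A B x v) = 0"
proof -
  have fC: "finite C" using class_fin[OF C] .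
  obtain c where c: "C = Rm A B `` {c}" using C by (auto simp: quotient_def)
  have iff: "A e \<in> C \<longleftrightarrow> B e \<in> C" for e
  proof -
    have "(A e, B e) \<in> Rm A B" by (rule edge_R)
    moreover have "(B e, A e) \<in> Rm A B" using edge_R equiv_R by (meson equivE symD)
    ultimately show ?thesis using equiv_R unfolding c by (auto elim!: equivE dest: transD)
  qed
  have "(\<Sum>v\<in>C. Bmacro A B x v) = (\<Sum>e\<in>UNIV. \<Sum>v\<in>C. x $ e * (ind (B e) v - ind (A e) v))"
    unfolding Bm_apply by (rule sum.swap)
  also have "\<dots> = (\<Sum>e\<in>UNIV. x $ e * ((\<Sum>v\<in>C. ind (B e) v) - (\<Sum>v\<in>C. ind (A e) v)))"
    by (simp only: sum_distrib_left[symmetric] sum_subtractf)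
  also have "\<dots> = 0" using fC iff by (simp add: sum_ind)
  finally show ?thesis .
qed

end

lemma ind_inj: "inj (ind :: 'a \<Rightarrow> _)"
proof (rule injI)
  fix a b :: 'a assume "ind a = ind b"
  then have "ind a a = ind b a" by simp
  then show "a = b" by (simp add: ind_def split: if_splits)
qed

lemma indep_ind: "FV.independent (ind ` (V::'a set))"
  unfolding FV.independent_explicit_finite_subsets
proof (intro allI impI ballI)
  fix T u t assume T: "T \<subseteq> ind ` V" "finite T" and s: "(\<Sum>v\<in>T. (\<lambda>w. u v * v w)) = 0" and t: "t \<in> T"
  obtain a where a: "t = ind a" using T t by auto
  have "0 = (\<Sum>v\<in>T. (\<lambda>w. u v * v w)) a" unfolding s by simp
  also have "\<dots> = (\<Sum>v\<in>T. u v * v a)" by (simp add: fsum_apply)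
  also have "\<dots> = (\<Sum>v\<in>T. if v = t then u t else 0)"
  proof (intro sum.cong refl)
    fix v assume "v \<in> T"
    then obtain b where b: "v = ind b" using T by auto
    show "u v * v a = (if v = t then u t else 0)"
    proof (cases "b = a")
      case True then show ?thesis using a b by (simp add: ind_def)
    next
      case False
      have "v \<noteq> t"
      proof
        assume "v = t"
        then have "ind b = ind a" using a b by simp
        then have "b = a" by (rule injD[OF ind_inj])
        then show False using False by simp
      qed
      moreover have "v a = 0" using False b by (simp add: ind_def)
      ultimately show ?thesis by simp
    qed
  qed
  also have "\<dots> = u t" using T t by simp
  finally show "u t = 0" by simp
qed
lemma span_ind:
  assumes finV: "finite (V::'a set)"
  shows "{g :: 'a \<Rightarrow> real. \<forall>v. v \<notin> V \<longrightarrow> g v = 0} \<subseteq> FV.span (ind ` V)"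
proof
  fix g :: "'a \<Rightarrow> real" assume g: "g \<in> {g. \<forall>v. v \<notin> V \<longrightarrow> g v = 0}"
  have expand: "g = (\<Sum>v\<in>V. (\<lambda>w. g v * ind v w))"
  proof
    fix w
    have "(\<Sum>v\<in>V. (\<lambda>w. g v * ind v w)) w = (\<Sum>v\<in>V. g v * ind v w)" by (simp add: fsum_apply)
    also have "\<dots> = (\<Sum>v\<in>V. if v = w then g w else 0)" by (intro sum.cong) (auto simp: ind_def)
    also have "\<dots> = g w" using g finV by (cases "w \<in> V") auto
    finally show "g w = (\<Sum>v\<in>V. (\<lambda>w. g v * ind v w)) w" by simp
  qed
  have "(\<lambda>w. g v * ind v w) \<in> FV.span (ind ` V)" if v: "v \<in> V" for v
  proof -
    have "ind v \<in> FV.span (ind ` V)" by (rule FV.span_base) (use v in auto)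
    from FV.span_scale[OF this, of "g v"] show ?thesis by simp
  qed
  then have "(\<Sum>v\<in>V. (\<lambda>w. g v * ind v w)) \<in> FV.span (ind ` V)"
    by (rule FV.span_sum)
  then show "g \<in> FV.span (ind ` V)" using expand by simp
qed

context fixes A B :: "'e::finite \<Rightarrow> 'v tensor"
begin

definition rep :: "'v tensor set \<Rightarrow> 'v tensor" where "rep C = (SOME r. r \<in> C)"

lemma rep_in:
  assumes C: "C \<in> Vmacro A B // Rm A B" shows "rep C \<in> C"
proof -
  obtain c where "C = Rm A B `` {c}" using C by (auto simp: quotient_def)
  then have "c \<in> C" by (auto simp: Rm_def)
  then have "\<exists>r. r \<in> C" by blast
  then show ?thesis unfolding rep_def by (rule someI_ex)
qed

lemma class_eq: "C \<in> Vmacro A B // Rm A B \<Longrightarrow> D \<in> Vmacro A B // Rm A B \<Longrightarrow> x \<in> C \<Longrightarrow> x \<in> D \<Longrightarrow> C = D"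
proof -
  assume C: "C \<in> Vmacro A B // Rm A B" and D: "D \<in> Vmacro A B // Rm A B" and x: "x \<in> C" "x \<in> D"
  have "Vmacro A B // Rm A B \<subseteq> UNIV // Rm A B" by (auto simp: quotient_def)
  then have "C \<in> UNIV // Rm A B" "D \<in> UNIV // Rm A B" using C D by auto
  then show "C = D" using quotient_disj[OF equiv_R] x by blast
qed

lemma dim_range_Bm:
  "vector_space.dim (\<lambda>(r::real) (f::'v tensor \<Rightarrow> real) v. r * f v) (range (Bmacro A B))
     + card (Vmacro A B // Rm A B) = card (Vmacro A B)"
proof -
  let ?V = "Vmacro A B"
  let ?Q = "?V // Rm A B"
  let ?R = "range (Bmacro A B)"
  define SV where "SV = {g::'v tensor \<Rightarrow> real. \<forall>v. v \<notin> ?V \<longrightarrow> g v = 0}"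
  define E1 where "E1 = ind ` ?V"
  define Gs where "Gs = (\<lambda>C. ind (rep C)) ` ?Q"
  have finQ: "finite ?Q" using finV unfolding quotient_def by (intro finite_UN_I) auto
  have E1sub: "E1 \<subseteq> SV" by (auto simp: E1_def SV_def ind_def)
  have E1span: "SV \<subseteq> FV.span E1" unfolding SV_def E1_def by (rule span_ind[OF finV])
  have E1ind: "FV.independent E1" unfolding E1_def by (rule indep_ind)
  have cE1: "card E1 = card ?V" unfolding E1_def by (intro card_image inj_on_subset[OF ind_inj]) simp
  have dSV: "card E1 = FV.dim SV" by (rule FV.basis_card_eq_dim[OF E1sub E1span E1ind])
  have RSV: "?R \<subseteq> SV" using Bm_supp by (auto simp: SV_def)
  obtain b where b: "b \<subseteq> ?R" "FV.independent b" "?R \<subseteq> FV.span b" "card b = FV.dim ?R"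
    using FV.basis_exists by blast
  have finE1: "finite E1" using finV[of A B] by (simp add: E1_def)
  have "b \<subseteq> FV.span E1" using b(1) RSV E1span by blast
  then have finb: "finite b" using FV.independent_span_bound[OF finE1 b(2)] by blast
  have sig_R: "(\<Sum>w\<in>C. g w) = 0" if "g \<in> ?R" "C \<in> ?Q" for g C
    using that sigma_Bm by auto
  have sig_G: "(\<Sum>w\<in>C. ind (rep D) w) = (if C = D then 1 else 0)" if "C \<in> ?Q" "D \<in> ?Q" for C D
  proof -
    have "(\<Sum>w\<in>C. ind (rep D) w) = (if rep D \<in> C then 1 else 0)"
      using class_fin[OF that(1)] by (simp add: sum_ind)
    also have "(rep D \<in> C) = (C = D)" using class_eq[OF that] rep_in that by blast
    finally show ?thesis .
  qed
  have Gs_inj: "inj_on (\<lambda>C. ind (rep C)) ?Q"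
  proof (rule inj_onI)
    fix C D assume "C \<in> ?Q" "D \<in> ?Q" "ind (rep C) = ind (rep D)"
    then have "(\<Sum>w\<in>C. ind (rep C) w) = (\<Sum>w\<in>C. ind (rep D) w)" by simp
    then have "(if C = C then 1 else 0) = (if C = D then (1::real) else 0)"
      using sig_G[OF \<open>C \<in> ?Q\<close> \<open>C \<in> ?Q\<close>] sig_G[OF \<open>C \<in> ?Q\<close> \<open>D \<in> ?Q\<close>] by simp
    then show "C = D" by (cases "C = D") simp_all
  qed
  have cGs: "card Gs = card ?Q" unfolding Gs_def using Gs_inj by (rule card_image)
  have finGs: "finite Gs" using finQ by (simp add: Gs_def)
  have disj: "b \<inter> Gs = {}"
  proof -
    { fix g assume g: "g \<in> b" "g \<in> Gs"
      then obtain C where C: "C \<in> ?Q" "g = ind (rep C)" by (auto simp: Gs_def)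
      have "(\<Sum>w\<in>C. g w) = 0" using sig_R g(1) b(1) C(1) by blast
      moreover have "(\<Sum>w\<in>C. g w) = 1" using sig_G[OF C(1) C(1)] C(2) by simp
      ultimately have False by simp }
    then show ?thesis by blast
  qed
  have GsSV: "Gs \<subseteq> SV"
  proof
    fix g assume "g \<in> Gs"
    then obtain C where C: "C \<in> ?Q" "g = ind (rep C)" by (auto simp: Gs_def)
    have "rep C \<in> ?V" using rep_in[OF C(1)] class_sub[OF C(1)] by blast
    then show "g \<in> SV" using C(2) by (auto simp: SV_def ind_def)
  qed
  have bGsub: "b \<union> Gs \<subseteq> SV" using b(1) RSV GsSV by blast
  have bGspan: "SV \<subseteq> FV.span (b \<union> Gs)"
  proof -
    have "ind v \<in> FV.span (b \<union> Gs)" if v: "v \<in> ?V" for v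
    proof -
      define C where "C = Rm A B `` {v}"
      have C: "C \<in> ?Q" using v by (auto simp: C_def quotient_def)
      have "rep C \<in> C" by (rule rep_in[OF C])
      then have "(v, rep C) \<in> Rm A B" by (simp add: C_def)
      then have "ind (rep C) - ind v \<in> ?R" by (rule path_range)
      then have f1: "ind (rep C) - ind v \<in> FV.span (b \<union> Gs)"
        using b(3) FV.span_mono[of b "b \<union> Gs"] by blast
      have f2: "ind (rep C) \<in> FV.span (b \<union> Gs)"
        using C by (intro FV.span_base) (auto simp: Gs_def)
      have "ind (rep C) - (ind (rep C) - ind v) \<in> FV.span (b \<union> Gs)"
        by (rule FV.span_diff[OF f2 f1])
      then show ?thesis by simp
    qed
    then have "E1 \<subseteq> FV.span (b \<union> Gs)" by (auto simp: E1_def)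
    then have "FV.span E1 \<subseteq> FV.span (b \<union> Gs)" by (rule FV.span_minimal[OF _ FV.subspace_span])
    then show ?thesis using E1span by blast
  qed
  have bGind: "FV.independent (b \<union> Gs)"
    unfolding FV.independent_explicit_finite_subsets
  proof (intro allI impI)
    fix T u assume T: "T \<subseteq> b \<union> Gs" "finite T" and s: "(\<Sum>v\<in>T. (\<lambda>w. u v * v w)) = 0"
    have Gz: "u t = 0" if t: "t \<in> T" "t \<in> Gs" for t
    proof -
      obtain C where C: "C \<in> ?Q" "t = ind (rep C)" using t by (auto simp: Gs_def)
      have "0 = (\<Sum>w\<in>C. (\<Sum>v\<in>T. (\<lambda>w. u v * v w)) w)" using s by simp
      also have "\<dots> = (\<Sum>v\<in>T. u v * (\<Sum>w\<in>C. v w))"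
        by (simp add: fsum_apply sum_distrib_left) (rule sum.swap)
      also have "\<dots> = (\<Sum>v\<in>T. if v = t then u t else 0)"
      proof (intro sum.cong refl)
        fix v assume v: "v \<in> T"
        show "u v * (\<Sum>w\<in>C. v w) = (if v = t then u t else 0)"
        proof (cases "v \<in> b")
          case True
          then have "v \<noteq> t" using disj t by blast
          moreover have "(\<Sum>w\<in>C. v w) = 0" using sig_R True b(1) C(1) by blast
          ultimately show ?thesis by simp
        next
          case False
          then obtain D where D: "D \<in> ?Q" "v = ind (rep D)" using v T by (auto simp: Gs_def)
          have "(\<Sum>w\<in>C. v w) = (if C = D then 1 else 0)" using sig_G[OF C(1) D(1)] D(2) by simp
          moreover have "(v = t) = (C = D)"
            using Gs_inj C D by (auto simp: inj_on_def)
          ultimately show ?thesis by (cases "C = D") auto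
        qed
      qed
      also have "\<dots> = u t" using t T(2) by simp
      finally show ?thesis by simp
    qed
    have "(\<Sum>v\<in>T \<inter> b. (\<lambda>w. u v * v w)) = (\<Sum>v\<in>T. (\<lambda>w. u v * v w))"
    proof (rule sum.mono_neutral_left)
      show "finite T" by fact
      show "T \<inter> b \<subseteq> T" by blast
      show "\<forall>i\<in>T - T \<inter> b. (\<lambda>w. u i * i w) = 0"
        using Gz T(1) by (auto simp: fun_eq_iff)
    qed
    then have "(\<Sum>v\<in>T \<inter> b. (\<lambda>w. u v * v w)) = 0" using s by simp
    then have bz: "\<forall>v\<in>T \<inter> b. u v = 0"
      using b(2) T(2) unfolding FV.independent_explicit_finite_subsets by blast
    show "\<forall>v\<in>T. u v = 0" using bz Gz T(1) by blast
  qed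
  have "card (b \<union> Gs) = FV.dim SV" by (rule FV.basis_card_eq_dim[OF bGsub bGspan bGind])
  moreover have "card (b \<union> Gs) = card b + card Gs" using card_Un_disjoint[OF finb finGs disj] .
  ultimately show ?thesis using dSV cE1 cGs b(4) by simp
qed

end

theorem theorem6p10:
  fixes A B :: "'e::finite \<Rightarrow> 'v::finite list \<Rightarrow> real" and k :: nat
  assumes finA: "\<forall>e. finite {w. A e w \<noteq> 0}"
      and finB: "\<forall>e. finite {w. B e w \<noteq> 0}"
  shows "(transpose (Lmat A B k) = Lmat A B k \<and> (\<forall>x. 0 \<le> x \<bullet> (Lmat A B k *v x)))
    \<and> {x. Lmat A B k *v x = 0} = Zk A B k
    \<and> int (rank (Lmat A B k)) = int (card (Vmacro A B)) - int (c_macro A B) - int (delta A B k)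
    \<and> (\<forall>l. k \<le> l \<longrightarrow>
          (\<forall>x. x \<bullet> (Lmat A B k *v x) \<le> x \<bullet> (Lmat A B l *v x))
        \<and> (\<forall>i < CARD('e). eigenvalues_asc (Lmat A B k) ! i \<le> eigenvalues_asc (Lmat A B l) ! i))"
proof -
  let ?L = "Lmat A B k"
  let ?sF = "\<lambda>(r::real) (f::'v tensor \<Rightarrow> real) v. r * f v"
  have part1: "transpose ?L = ?L \<and> (\<forall>x. 0 \<le> x \<bullet> (?L *v x))"
    using Lmat_symm Lmat_psd by blast
  have part2: "{x. ?L *v x = 0} = Zk A B k" by (rule Lmat_ker)
  have part4: "\<forall>l. k \<le> l \<longrightarrow>
          (\<forall>x. x \<bullet> (?L *v x) \<le> x \<bullet> (Lmat A B l *v x))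
        \<and> (\<forall>i < CARD('e). eigenvalues_asc ?L ! i \<le> eigenvalues_asc (Lmat A B l) ! i)"
  proof (rule allI, rule impI)
    fix l assume kl: "k \<le> l"
    have mono: "\<forall>x. x \<bullet> (?L *v x) \<le> x \<bullet> (Lmat A B l *v x)" using Lmat_mono[OF kl] by blast
    have "\<forall>i < CARD('e). eigenvalues_asc ?L ! i \<le> eigenvalues_asc (Lmat A B l) ! i"
      using weyl[OF Lmat_symm Lmat_symm mono] by blast
    then show "(\<forall>x. x \<bullet> (?L *v x) \<le> x \<bullet> (Lmat A B l *v x))
        \<and> (\<forall>i < CARD('e). eigenvalues_asc ?L ! i \<le> eigenvalues_asc (Lmat A B l) ! i)"
      using mono by blast
  qed
  let ?n = "CARD('e)"
  have subZ: "subspace (Zk A B k)"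
    unfolding part2[symmetric] subspace_def
    by (simp add: matrix_vector_right_distrib matrix_vector_mult_scaleR)
  have rn1: "dim (range ((*v) ?L)) + dim (Zk A B k) = ?n"
  proof -
    have "dim ((*v) ?L ` UNIV) + dim (UNIV \<inter> {x. ?L *v x = 0}) = dim (UNIV :: (real^'e) set)"
      by (rule real_vector.rank_nullity_sub[OF matrix_vector_mul_linear subspace_UNIV finite_Basis])
         (simp add: span_Basis)
    then show ?thesis using part2 by (simp add: dim_UNIV)
  qed
  have rk: "rank ?L = dim (range ((*v) ?L))" by (rule rank_dim_range)
  have VP: "vector_space_pair (scaleR :: real \<Rightarrow> real^'e \<Rightarrow> _) ?sF"
    by (simp add: vector_space_pair_def real_vector.vector_space_axioms FV.vector_space_axioms)
  have kerZ: "{x. Bmacro A B x = 0} \<subseteq> Zk A B k"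
  proof
    fix x assume "x \<in> {x. Bmacro A B x = 0}"
    then have "bdry A B x = phi_hat A B 0" using phi_Bm[of A B x] by simp
    also have "\<dots> = (\<lambda>_. 0)" by (simp add: phi_hat_def fun_eq_iff)
    finally show "x \<in> Zk A B k" by (simp add: Zk_def trunc_def fun_eq_iff)
  qed
  have imgZ: "Bmacro A B ` Zk A B k = range (Bmacro A B) \<inter> {f. trunc k (phi_hat A B f) = (\<lambda>_. 0)}"
    by (auto simp: phi_Bm Zk_def)
  have spB: "(UNIV::(real^'e) set) \<subseteq> module.span scaleR Basis"
    using span_Basis[where 'a="real^'e"] by (simp add: span_raw_def)
  have spB': "Zk A B k \<subseteq> module.span scaleR Basis" using spB by blast
  have F1: "FV.dim (Bmacro A B ` Zk A B k) + dim (Zk A B k \<inter> {x. Bmacro A B x = 0}) = dim (Zk A B k)"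
    using vector_space_pair.rank_nullity_sub[OF VP Bm_lin[of A B] subZ[unfolded subspace_raw_def] finite_Basis spB']
    by (simp add: dim_raw_def)
  have F2: "FV.dim (Bmacro A B ` UNIV) + dim (UNIV \<inter> {x. Bmacro A B x = 0}) = dim (UNIV :: (real^'e) set)"
    using vector_space_pair.rank_nullity_sub[OF VP Bm_lin[of A B] subspace_UNIV[unfolded subspace_raw_def] finite_Basis spB]
    by (simp add: dim_raw_def)
  have F3: "FV.dim (range (Bmacro A B)) + c_macro A B = card (Vmacro A B)"
    using dim_range_Bm[of A B] by (simp add: c_macro_def Rm_def)
  have dl: "delta A B k = FV.dim (Bmacro A B ` Zk A B k)" by (simp add: delta_def imgZ)
  have "Zk A B k \<inter> {x. Bmacro A B x = 0} = {x. Bmacro A B x = 0}" using kerZ by blast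
  then have part3: "int (rank ?L) = int (card (Vmacro A B)) - int (c_macro A B) - int (delta A B k)"
    using rn1 rk F1 F2 F3 dl by (simp add: dim_UNIV)
  show ?thesis using part1 part2 part3 part4 by blast
qed

end
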